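(* Let $q$ be an odd prime power, $d$ a positive integer, and $\varphi_d$ the coloring defined below. Let $A,B \subseteq (\mathbb{F}_q^* )^d$ be disjoint sets of vectors and $\alpha \in C_d$ a color such that $\varphi_d(a,b) = \alpha$ for all $a \in A$ and $b\in B$. Then $A$ confines $B$ or $B$ confines $A$ (or both).
   Context: $\mathbb{F}_q^*$ is the set of nonzero elements of $\mathbb{F}_q$, endowed with an arbitrary fixed linear order; $(\mathbb{F}_q^* )^d$ is ordered lexicographically with respect to it. Let $C_d = \mathrm{DOT} \sqcup \mathrm{ZERO}\sqcup\mathrm{UP}\sqcup\mathrm{DOWN}$, where $\mathrm{DOT} = \mathbb{F}_q^*$ and ZERO, UP, DOWN are three disjoint copies of $\{1,\dots,d\}\times \mathbb{F}_q$. For distinct $x<y$ in $(\mathbb{F}_q^* )^d$, let $i$ be the first coordinate where $x$ and $y$ differ, and $x\cdot y$ the standard dot product; $\varphi_d(x,y)=\varphi_d(y,x)$ is $(i,x_i+y_i)$ in ZERO if $x\cdot y=0$; $(i,x_i+y_i)$ in UP if $x\cdot y\ne 0$ and $x\cdot y=x\cdot x$; $(i,x_i+y_i)$ in DOWN if $x\cdot y\notin\{0,x\cdot x\}$ and $x\cdot y=y\cdot y$; and $x\cdot y\in\mathrm{DOT}$ otherwise. $A$ confines $B$ means: for each $a \in A$, $a\cdot x = a\cdot y$ for all $x,y \in B$. *)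

theory Defs
  imports Main "HOL-Library.Cardinality"
begin

text \<open>Colours: DOT is F_q^*, ZERO/UP/DOWN are copies of {1..d} x F_q
  (indices are stored 1-based as naturals).\<close>
datatype 'a colour = Dot 'a | Zero nat 'a | Up nat 'a | Down nat 'a

definition nzvecs :: "nat \<Rightarrow> 'a::zero list set" where
  "nzvecs d = {x. length x = d \<and> (\<forall>i<d. x ! i \<noteq> 0)}"

definition dotp :: "'a::comm_semiring_0 list \<Rightarrow> 'a list \<Rightarrow> 'a" where
  "dotp x y = (\<Sum>i<length x. x ! i * y ! i)"

text \<open>First (0-based) coordinate where x and y differ.\<close>
definition first_diff :: "'a list \<Rightarrow> 'a list \<Rightarrow> nat" where
  "first_diff x y = (LEAST i. x ! i \<noteq> y ! i)"

definition lexless :: "('a \<times> 'a) set \<Rightarrow> 'a list \<Rightarrow> 'a list \<Rightarrow> bool" where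
  "lexless r x y = (x \<noteq> y \<and> (x ! first_diff x y, y ! first_diff x y) \<in> r)"

text \<open>Colour of the pair with x < y.\<close>
definition phi_ord :: "'a::field list \<Rightarrow> 'a list \<Rightarrow> 'a colour" where
  "phi_ord x y =
    (let i = first_diff x y; s = x ! i + y ! i; p = dotp x y in
     if p = 0 then Zero (Suc i) s
     else if p = dotp x x then Up (Suc i) s
     else if p = dotp y y then Down (Suc i) s
     else Dot p)"

definition phi :: "('a \<times> 'a) set \<Rightarrow> 'a::field list \<Rightarrow> 'a list \<Rightarrow> 'a colour" where
  "phi r x y = (if lexless r x y then phi_ord x y else phi_ord y x)"

definition confines :: "'a::comm_semiring_0 list set \<Rightarrow> 'a list set \<Rightarrow> bool" where
  "confines A B = (\<forall>a\<in>A. \<forall>x\<in>B. \<forall>y\<in>B. dotp a x = dotp a y)"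

end

theory Submission
  imports Defs
begin

lemma dotp_sym: "length x = length y \<Longrightarrow> dotp x y = dotp y (x::'a::comm_semiring_0 list)"
  unfolding dotp_def by (simp add: mult.commute)

lemma fd_sym: "first_diff x y = first_diff y x"
  unfolding first_diff_def by (metis)

lemma phi_ord_Dot: "phi_ord x y = Dot c \<Longrightarrow> dotp x y = c"
  unfolding phi_ord_def Let_def by (auto split: if_splits)

lemma phi_ord_Zero: "phi_ord x y = Zero i s \<Longrightarrow> dotp x y = 0"
  unfolding phi_ord_def Let_def by (auto split: if_splits)

lemma phi_ord_Up: "phi_ord x y = Up i s \<Longrightarrow> dotp x y = dotp x x \<and> i = Suc (first_diff x y) \<and> s = x ! first_diff x y + y ! first_diff x y"
  unfolding phi_ord_def Let_def by (auto split: if_splits)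

lemma phi_ord_Down: "phi_ord x y = Down i s \<Longrightarrow> dotp x y = dotp y y \<and> i = Suc (first_diff x y) \<and> s = x ! first_diff x y + y ! first_diff x y"
  unfolding phi_ord_def Let_def by (auto split: if_splits)

lemma phi_Dot: "phi r a b = Dot c \<Longrightarrow> length a = length b \<Longrightarrow> dotp a b = c"
  unfolding phi_def by (metis dotp_sym phi_ord_Dot)

lemma phi_Zero: "phi r a b = Zero i s \<Longrightarrow> length a = length b \<Longrightarrow> dotp a b = 0"
  unfolding phi_def by (metis dotp_sym phi_ord_Zero)

lemma phi_Up: "phi r a b = Up i s \<Longrightarrow> length a = length b \<Longrightarrow>
   i = Suc (first_diff a b) \<and> s = a ! first_diff a b + b ! first_diff a b \<and>
   (if lexless r a b then dotp a b = dotp a a else dotp a b = dotp b b)"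
  unfolding phi_def
  by (cases "lexless r a b") (auto dest!: phi_ord_Up simp: dotp_sym fd_sym add.commute)

lemma phi_Down: "phi r a b = Down i s \<Longrightarrow> length a = length b \<Longrightarrow>
   i = Suc (first_diff a b) \<and> s = a ! first_diff a b + b ! first_diff a b \<and>
   (if lexless r a b then dotp a b = dotp b b else dotp a b = dotp a a)"
  unfolding phi_def
  by (cases "lexless r a b") (auto dest!: phi_ord_Down simp: dotp_sym fd_sym add.commute)

lemma uniform:
  assumes "\<forall>a\<in>A. \<forall>b\<in>B. first_diff a b = k \<and> a ! k + b ! k = (s::'a::field)"
    and "A \<inter> B = {}" and "a0 \<in> A" and "b0 \<in> B" and "a \<in> A" and "b \<in> B"
  shows "lexless r a b = lexless r a0 b0"
proof -
  have "a ! k + b0 ! k = a0 ! k + b0 ! k" "a0 ! k + b ! k = a0 ! k + b0 ! k"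
    using assms by auto
  hence "a ! k = a0 ! k" "b ! k = b0 ! k" by simp_all
  moreover have "a \<noteq> b" "a0 \<noteq> b0" using assms by auto
  ultimately show ?thesis using assms unfolding lexless_def by auto
qed

theorem lemma3p8:
  fixes r :: "('a::{finite,field} \<times> 'a) set"
    and d :: nat
    and A B :: "'a list set"
    and \<alpha> :: "'a colour"
  assumes "odd CARD('a)"
    and "strict_linear_order_on (UNIV - {0}) r"
    and "d > 0"
    and "A \<subseteq> nzvecs d" and "B \<subseteq> nzvecs d"
    and "A \<inter> B = {}"
    and "\<forall>a\<in>A. \<forall>b\<in>B. phi r a b = \<alpha>"
  shows "confines A B \<or> confines B A"
proof -
  have len: "\<And>a b. a \<in> A \<Longrightarrow> b \<in> B \<Longrightarrow> length a = length b"
    using assms(4,5) unfolding nzvecs_def by auto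
  show ?thesis
  proof (cases "A = {} \<or> B = {}")
    case True
    then show ?thesis unfolding confines_def by auto
  next
    case False
    then obtain a0 b0 where a0: "a0 \<in> A" and b0: "b0 \<in> B" by auto
    show ?thesis
    proof (cases \<alpha>)
      case (Dot c)
      then have "\<forall>a\<in>A. \<forall>b\<in>B. dotp a b = c" using assms(7) len phi_Dot by metis
      then show ?thesis unfolding confines_def by auto
    next
      case (Zero i s)
      then have "\<forall>a\<in>A. \<forall>b\<in>B. dotp a b = 0" using assms(7) len phi_Zero by metis
      then show ?thesis unfolding confines_def by auto
    next
      case (Up i s)
      have P: "\<And>a b. a \<in> A \<Longrightarrow> b \<in> B \<Longrightarrow> i = Suc (first_diff a b) \<and> s = a ! first_diff a b + b ! first_diff a b \<and>
         (if lexless r a b then dotp a b = dotp a a else dotp a b = dotp b b)"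
        using assms(7) len phi_Up Up by metis
      have U: "\<forall>a\<in>A. \<forall>b\<in>B. first_diff a b = i - 1 \<and> a ! (i - 1) + b ! (i - 1) = s"
        using P by fastforce
      have L: "\<And>a b. a \<in> A \<Longrightarrow> b \<in> B \<Longrightarrow> lexless r a b = lexless r a0 b0"
        using uniform[OF U assms(6) a0 b0] by blast
      show ?thesis
      proof (cases "lexless r a0 b0")
        case True
        then have "\<forall>a\<in>A. \<forall>b\<in>B. dotp a b = dotp a a" using P L by metis
        then show ?thesis unfolding confines_def by auto
      next
        case False
        then have "\<forall>a\<in>A. \<forall>b\<in>B. dotp b a = dotp b b" using P L len dotp_sym by metis
        then show ?thesis unfolding confines_def by auto
      qed
    next
      case (Down i s)
      have P: "\<And>a b. a \<in> A \<Longrightarrow> b \<in> B \<Longrightarrow> i = Suc (first_diff a b) \<and> s = a ! first_diff a b + b ! first_diff a b \<and>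
         (if lexless r a b then dotp a b = dotp b b else dotp a b = dotp a a)"
        using assms(7) len phi_Down Down by metis
      have U: "\<forall>a\<in>A. \<forall>b\<in>B. first_diff a b = i - 1 \<and> a ! (i - 1) + b ! (i - 1) = s"
        using P by fastforce
      have L: "\<And>a b. a \<in> A \<Longrightarrow> b \<in> B \<Longrightarrow> lexless r a b = lexless r a0 b0"
        using uniform[OF U assms(6) a0 b0] by blast
      show ?thesis
      proof (cases "lexless r a0 b0")
        case False
        then have "\<forall>a\<in>A. \<forall>b\<in>B. dotp a b = dotp a a" using P L by metis
        then show ?thesis unfolding confines_def by auto
      next
        case True
        then have "\<forall>a\<in>A. \<forall>b\<in>B. dotp b a = dotp b b" using P L len dotp_sym by metis
        then show ?thesis unfolding confines_def by auto
      qed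
    qed
  qed
qed

end
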